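(* Let $\mathfrak{X}=(X,\{R_i\}_{i=0}^{d+1})$ be a commutative association scheme with $d\ge 2$, $R_d^\top=R_{d+1}$ and $R_i^\top=R_i$ for $0\le i\le d-1$, whose symmetrization $\tilde{\mathfrak X}=(X,\{\tilde R_i\}_{i=0}^d)$ ($\tilde R_i=R_i$ for $i\le d-1$, $\tilde R_d=R_d\cup R_{d+1}$) is amorphic, with character table of the form: for primitive idempotents $\tilde E_0,\dots,\tilde E_d$ and $\tilde A_i$ the adjacency matrix of $\tilde R_i$ with valency $k_i$, $\tilde A_i\tilde E_0=k_i\tilde E_0$, $\tilde A_i\tilde E_i=b_i\tilde E_i$, $\tilde A_i\tilde E_j=a_i\tilde E_j$ for $1\le j\le d$, $j\ne i$, where $a_i\neq b_i$. Let $\Lambda$ be a nonempty subset of $\{1,2,\ldots,d+1\}$ and $R_\Lambda=\bigcup_{\alpha\in\Lambda}R_\alpha$. If the digraph $(X,R_{\Lambda})$ has $d+2$ distinct eigenvalues, then exactly one element of $\{d,d+1\}$ belongs to $\Lambda$.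
   Context: Association scheme: finite set $X$ with a partition of $X\times X$ into relations $R_0$ (diagonal), $R_1,\dots$, closed under transposition, with constant intersection numbers; commutative if these are symmetric in the lower indices. Adjacency matrices are the $01$-matrices of the relations; primitive idempotents $E_0=J/|X|,\dots$ of the Bose–Mesner algebra satisfy $A_iE_j\in\mathbb C E_j$. A symmetric scheme is amorphic if merging the nondiagonal relations along any partition of their index set into nonempty parts gives an association scheme. Eigenvalues of a digraph $(X,R)$ are those of its $01$ adjacency matrix. *)

theory Defs
  imports Complex_Main "Jordan_Normal_Form.Char_Poly"
begin

text \<open>The point set X is represented as {0..<n}; relations R 0, ..., R D (D = number of classes).\<close>

definition assoc_scheme :: "nat \<Rightarrow> (nat \<Rightarrow> (nat \<times> nat) set) \<Rightarrow> nat \<Rightarrow> bool" where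
  "assoc_scheme n R D \<longleftrightarrow>
     R 0 = {(x, x) | x. x < n} \<and>
     (\<forall>i\<le>D. R i \<noteq> {} \<and> R i \<subseteq> {..<n} \<times> {..<n}) \<and>
     (\<forall>i\<le>D. \<forall>j\<le>D. i \<noteq> j \<longrightarrow> R i \<inter> R j = {}) \<and>
     (\<Union>i\<le>D. R i) = {..<n} \<times> {..<n} \<and>
     (\<forall>i\<le>D. \<exists>j\<le>D. (R i)\<inverse> = R j) \<and>
     (\<forall>i\<le>D. \<forall>j\<le>D. \<forall>k\<le>D. \<exists>p. \<forall>(x, y)\<in>R k.
        card {z. z < n \<and> (x, z) \<in> R i \<and> (z, y) \<in> R j} = p)"

definition commutative_scheme :: "nat \<Rightarrow> (nat \<Rightarrow> (nat \<times> nat) set) \<Rightarrow> nat \<Rightarrow> bool" where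
  "commutative_scheme n R D \<longleftrightarrow> assoc_scheme n R D \<and>
     (\<forall>i\<le>D. \<forall>j\<le>D. \<forall>k\<le>D. \<forall>(x, y)\<in>R k.
        card {z. z < n \<and> (x, z) \<in> R i \<and> (z, y) \<in> R j} =
        card {z. z < n \<and> (x, z) \<in> R j \<and> (z, y) \<in> R i})"

definition symmetric_scheme :: "nat \<Rightarrow> (nat \<Rightarrow> (nat \<times> nat) set) \<Rightarrow> nat \<Rightarrow> bool" where
  "symmetric_scheme n R D \<longleftrightarrow> assoc_scheme n R D \<and> (\<forall>i\<le>D. (R i)\<inverse> = R i)"

text \<open>Merging of the nondiagonal relations along the partition of {1..D} into the
  nonempty fibres of a surjection f : {1..D} -> {1..m}.\<close>
definition merge_rel :: "(nat \<Rightarrow> (nat \<times> nat) set) \<Rightarrow> nat \<Rightarrow> (nat \<Rightarrow> nat) \<Rightarrow> nat \<Rightarrow> (nat \<times> nat) set" where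
  "merge_rel R D f j = (if j = 0 then R 0 else (\<Union>i\<in>{i. i \<in> {1..D} \<and> f i = j}. R i))"

definition amorphic :: "nat \<Rightarrow> (nat \<Rightarrow> (nat \<times> nat) set) \<Rightarrow> nat \<Rightarrow> bool" where
  "amorphic n R D \<longleftrightarrow> symmetric_scheme n R D \<and>
     (\<forall>m f. m \<ge> 1 \<and> f ` {1..D} = {1..m} \<longrightarrow> assoc_scheme n (merge_rel R D f) m)"

definition symmetrization :: "(nat \<Rightarrow> (nat \<times> nat) set) \<Rightarrow> nat \<Rightarrow> nat \<Rightarrow> (nat \<times> nat) set" where
  "symmetrization R d i = (if i = d then R d \<union> R (Suc d) else R i)"

definition adj_mat :: "nat \<Rightarrow> (nat \<times> nat) set \<Rightarrow> complex mat" where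
  "adj_mat n S = mat n n (\<lambda>(x, y). if (x, y) \<in> S then 1 else 0)"

definition valency :: "nat \<Rightarrow> (nat \<times> nat) set \<Rightarrow> nat" where
  "valency n S = card {y. y < n \<and> (0, y) \<in> S}"

text \<open>Membership in the Bose-Mesner algebra (span of the adjacency matrices):
  entries are constant on each relation.\<close>
definition in_bm_algebra :: "nat \<Rightarrow> (nat \<Rightarrow> (nat \<times> nat) set) \<Rightarrow> nat \<Rightarrow> complex mat \<Rightarrow> bool" where
  "in_bm_algebra n R D M \<longleftrightarrow> M \<in> carrier_mat n n \<and>
     (\<forall>i\<le>D. \<forall>(x, y)\<in>R i. \<forall>(u, v)\<in>R i. M $$ (x, y) = M $$ (u, v))"

definition primitive_idempotents :: "nat \<Rightarrow> (nat \<Rightarrow> (nat \<times> nat) set) \<Rightarrow> nat \<Rightarrow> (nat \<Rightarrow> complex mat) \<Rightarrow> bool" where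
  "primitive_idempotents n R D E \<longleftrightarrow>
     (\<forall>j\<le>D. in_bm_algebra n R D (E j) \<and> E j \<noteq> 0\<^sub>m n n \<and>
        (\<forall>l\<le>D. E j * E l = (if j = l then E j else 0\<^sub>m n n))) \<and>
     (\<forall>x<n. \<forall>y<n. (\<Sum>j\<le>D. E j $$ (x, y)) = (if x = y then 1 else 0)) \<and>
     E 0 = mat n n (\<lambda>_. 1 / of_nat n)"

end

theory Submission imports Defs begin

lemma bm_eq:
  assumes "\<forall>i\<le>d. \<forall>(x, y)\<in>S i. \<forall>(u, v)\<in>S i. (E::nat\<times>nat\<Rightarrow>complex) (x, y) = E (u, v)"
    "i \<le> d" "(p,q) \<in> S i" "(u,w) \<in> S i"
  shows "E (p,q) = E (u,w)"
proof -
  from assms(1,2) have "\<forall>(x, y)\<in>S i. \<forall>(u, v)\<in>S i. E (x, y) = E (u, v)" by blast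
  hence "\<forall>(u, v)\<in>S i. E (p, q) = E (u, v)" using assms(3) by fast
  thus ?thesis using assms(4) by fast
qed

lemma key:
  fixes A :: "complex mat" and E :: "nat \<Rightarrow> complex mat"
  assumes A: "A \<in> carrier_mat n n" and E: "\<forall>j\<le>d. E j \<in> carrier_mat n n"
    and EA: "\<forall>j\<le>d. E j * A = \<theta> j \<cdot>\<^sub>m E j"
    and sumE: "\<forall>x<n. \<forall>y<n. (\<Sum>j\<le>d. E j $$ (x, y)) = (if x = y then 1 else 0)"
    and ev: "eigenvalue A \<mu>"
  shows "\<mu> \<in> \<theta> ` {..d}"
proof -
  from ev obtain v where v: "v \<in> carrier_vec n" "v \<noteq> 0\<^sub>v n" "A *\<^sub>v v = \<mu> \<cdot>\<^sub>v v"
    using A unfolding eigenvalue_def eigenvector_def by auto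
  have "\<exists>k\<le>d. E k *\<^sub>v v \<noteq> 0\<^sub>v n"
  proof (rule ccontr)
    assume "\<not> ?thesis"
    hence z: "\<forall>k\<le>d. E k *\<^sub>v v = 0\<^sub>v n" by auto
    have "v = 0\<^sub>v n"
    proof (rule eq_vecI)
      fix i assume i: "i < dim_vec (0\<^sub>v n :: complex vec)"
      hence i': "i < n" by simp
      have "(\<Sum>k\<le>d. (E k *\<^sub>v v) $ i) = 0" using z i' by simp
      moreover have "(\<Sum>k\<le>d. (E k *\<^sub>v v) $ i) = (\<Sum>k\<le>d. \<Sum>z<n. E k $$ (i, z) * v $ z)"
      proof (rule sum.cong)
        fix k assume "k \<in> {..d}"
        hence "E k \<in> carrier_mat n n" using E by auto
        thus "(E k *\<^sub>v v) $ i = (\<Sum>z<n. E k $$ (i, z) * v $ z)"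
          using i' v(1) by (simp add: scalar_prod_def lessThan_atLeast0)
      qed simp
      moreover have "\<dots> = (\<Sum>z<n. (\<Sum>k\<le>d. E k $$ (i, z)) * v $ z)"
        by (subst sum.swap) (simp add: sum_distrib_right)
      moreover have "\<dots> = (\<Sum>z<n. (if i = z then v $ z else 0))"
        using sumE i' by (intro sum.cong) auto
      moreover have "\<dots> = v $ i" using i' by simp
      ultimately show "v $ i = 0\<^sub>v n $ i" using i' by simp
    next
      show "dim_vec v = dim_vec (0\<^sub>v n :: complex vec)" using v(1) by simp
    qed
    with v(2) show False by simp
  qed
  then obtain k where k: "k \<le> d" "E k *\<^sub>v v \<noteq> 0\<^sub>v n" by auto
  have Ek: "E k \<in> carrier_mat n n" using E k(1) by auto
  have "E k *\<^sub>v (A *\<^sub>v v) = (E k * A) *\<^sub>v v"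
    using Ek A v(1) by (simp add: assoc_mult_mat_vec)
  also have "\<dots> = \<theta> k \<cdot>\<^sub>v (E k *\<^sub>v v)" using EA k(1) Ek v(1) by auto
  finally have 1: "\<mu> \<cdot>\<^sub>v (E k *\<^sub>v v) = \<theta> k \<cdot>\<^sub>v (E k *\<^sub>v v)"
    using v Ek by (simp add: mult_mat_vec)
  obtain i where i: "i < n" "(E k *\<^sub>v v) $ i \<noteq> 0"
  proof -
    have "\<not> (\<forall>i<n. (E k *\<^sub>v v) $ i = 0)"
    proof
      assume z: "\<forall>i<n. (E k *\<^sub>v v) $ i = 0"
      have "E k *\<^sub>v v = 0\<^sub>v n"
        by (rule eq_vecI) (use z Ek in auto)
      with k(2) show False by simp
    qed
    thus ?thesis using that by blast
  qed
  have "\<mu> * (E k *\<^sub>v v) $ i = \<theta> k * (E k *\<^sub>v v) $ i"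
    using arg_cong[OF 1, of "\<lambda>w. w $ i"] i Ek by simp
  with i(2) have "\<mu> = \<theta> k" by simp
  with k(1) show ?thesis by auto
qed

theorem lemma3p3:
  fixes n d :: nat and R :: "nat \<Rightarrow> (nat \<times> nat) set" and \<Lambda> :: "nat set"
  assumes "commutative_scheme n R (d + 1)"
    and "d \<ge> 2"
    and "(R d)\<inverse> = R (d + 1)"
    and "\<forall>i<d. (R i)\<inverse> = R i"
    and "amorphic n (symmetrization R d) d"
    and "\<exists>E a b :: nat \<Rightarrow> complex.
           primitive_idempotents n (symmetrization R d) d E \<and>
           (\<forall>i\<in>{1..d}.
              adj_mat n (symmetrization R d i) * E 0
                = of_nat (valency n (symmetrization R d i)) \<cdot>\<^sub>m E 0 \<and>
              adj_mat n (symmetrization R d i) * E i = b i \<cdot>\<^sub>m E i \<and>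
              (\<forall>j\<in>{1..d}. j \<noteq> i \<longrightarrow> adj_mat n (symmetrization R d i) * E j = a i \<cdot>\<^sub>m E j) \<and>
              a i \<noteq> b i)"
    and "\<Lambda> \<noteq> {}"
    and "\<Lambda> \<subseteq> {1..d + 1}"
    and "card {\<mu>. eigenvalue (adj_mat n (\<Union>\<alpha>\<in>\<Lambda>. R \<alpha>)) \<mu>} = d + 2"
  shows "(d \<in> \<Lambda>) \<noteq> (d + 1 \<in> \<Lambda>)"
proof (rule ccontr)
  assume neg: "\<not> ((d \<in> \<Lambda>) \<noteq> (d + 1 \<in> \<Lambda>))"
  define S where "S = symmetrization R d"
  from assms(6) obtain E :: "nat \<Rightarrow> complex mat" and a b :: "nat \<Rightarrow> complex" where
    H: "primitive_idempotents n S d E \<and>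
           (\<forall>i\<in>{1..d}.
              adj_mat n (S i) * E 0
                = of_nat (valency n (S i)) \<cdot>\<^sub>m E 0 \<and>
              adj_mat n (S i) * E i = b i \<cdot>\<^sub>m E i \<and>
              (\<forall>j\<in>{1..d}. j \<noteq> i \<longrightarrow> adj_mat n (S i) * E j = a i \<cdot>\<^sub>m E j) \<and>
              a i \<noteq> b i)"
    unfolding S_def by (elim exE)
  have PI: "primitive_idempotents n S d E" using H by (rule conjunct1)
  have EV: "\<forall>i\<in>{1..d}.
              adj_mat n (S i) * E 0 = of_nat (valency n (S i)) \<cdot>\<^sub>m E 0 \<and>
              adj_mat n (S i) * E i = b i \<cdot>\<^sub>m E i \<and>
              (\<forall>j\<in>{1..d}. j \<noteq> i \<longrightarrow> adj_mat n (S i) * E j = a i \<cdot>\<^sub>m E j)"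
    using H by blast
  have SS: "symmetric_scheme n S d" using assms(5) unfolding amorphic_def S_def by (rule conjunct1)
  hence AS: "assoc_scheme n S d" and symS: "\<forall>i\<le>d. (S i)\<inverse> = S i"
    unfolding symmetric_scheme_def by blast+
  have disj: "\<forall>i\<le>d. \<forall>j\<le>d. i \<noteq> j \<longrightarrow> S i \<inter> S j = {}"
    using AS unfolding assoc_scheme_def by (elim conjE) assumption
  have cover: "(\<Union>i\<le>d. S i) = {..<n} \<times> {..<n}"
    using AS unfolding assoc_scheme_def by (elim conjE) assumption
  have PI1: "\<forall>j\<le>d. in_bm_algebra n S d (E j) \<and> E j \<noteq> 0\<^sub>m n n \<and>
        (\<forall>l\<le>d. E j * E l = (if j = l then E j else 0\<^sub>m n n))"
    using PI unfolding primitive_idempotents_def by (rule conjunct1)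
  have bm: "in_bm_algebra n S d (E j)" if "j \<le> d" for j
    using PI1 that by simp
  have Ecar: "\<forall>j\<le>d. E j \<in> carrier_mat n n"
  proof (intro allI impI)
    fix j assume "j \<le> d"
    hence "in_bm_algebra n S d (E j)" by (rule bm)
    thus "E j \<in> carrier_mat n n" unfolding in_bm_algebra_def by (rule conjunct1)
  qed
  have sumE: "\<forall>x<n. \<forall>y<n. (\<Sum>j\<le>d. E j $$ (x, y)) = (if x = y then 1 else 0)"
    using PI unfolding primitive_idempotents_def by (elim conjE) assumption
  have Esym: "E j $$ (x, y) = E j $$ (y, x)" if "j \<le> d" "x < n" "y < n" for j x y
  proof -
    from cover that obtain i where i: "i \<le> d" "(x, y) \<in> S i" by blast
    with symS have yx: "(y, x) \<in> S i" by blast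
    have "in_bm_algebra n S d (E j)" using that(1) by (rule bm)
    hence H: "\<forall>i\<le>d. \<forall>(x, y)\<in>S i. \<forall>(u, v)\<in>S i. E j $$ (x, y) = E j $$ (u, v)"
      unfolding in_bm_algebra_def by (rule conjunct2)
    show ?thesis by (rule bm_eq[OF H i(1) i(2) yx])
  qed
  define T where "T = \<Lambda> \<inter> {1..d}"
  define U where "U = (\<Union>\<alpha>\<in>T. S \<alpha>)"
  have UL: "(\<Union>\<alpha>\<in>\<Lambda>. R \<alpha>) = U"
  proof (cases "d \<in> \<Lambda>")
    case True
    with neg have d1: "d + 1 \<in> \<Lambda>" by auto
    show ?thesis
    proof
      show "(\<Union>\<alpha>\<in>\<Lambda>. R \<alpha>) \<subseteq> U"
      proof
        fix p assume "p \<in> (\<Union>\<alpha>\<in>\<Lambda>. R \<alpha>)"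
        then obtain \<alpha> where al: "\<alpha> \<in> \<Lambda>" "p \<in> R \<alpha>" by auto
        show "p \<in> U"
        proof (cases "\<alpha> \<ge> d")
          case True
          hence "\<alpha> = d \<or> \<alpha> = d + 1" using al assms(8) by force
          hence "p \<in> S d" using al unfolding S_def symmetrization_def by auto
          moreover have "d \<in> T" using \<open>d \<in> \<Lambda>\<close> assms(2) unfolding T_def by auto
          ultimately show ?thesis unfolding U_def by auto
        next
          case False
          hence "p \<in> S \<alpha>" "\<alpha> \<in> T" using al assms(8) unfolding S_def symmetrization_def T_def by auto
          thus ?thesis unfolding U_def by auto
        qed
      qed
      show "U \<subseteq> (\<Union>\<alpha>\<in>\<Lambda>. R \<alpha>)"
        using True d1 unfolding U_def T_def S_def symmetrization_def by (auto split: if_splits)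
    qed
  next
    case False
    with neg have d1: "d + 1 \<notin> \<Lambda>" by auto
    have "\<forall>\<alpha>\<in>\<Lambda>. \<alpha> \<in> T \<and> S \<alpha> = R \<alpha>"
      using False d1 assms(8) unfolding T_def S_def symmetrization_def
      by (metis IntI atLeastAtMost_iff le_Suc_eq Suc_eq_plus1 subsetD)
    moreover have "T \<subseteq> \<Lambda>" unfolding T_def by auto
    ultimately show ?thesis unfolding U_def by (auto; metis)
  qed
  have Usym: "(z, y) \<in> U \<longleftrightarrow> (y, z) \<in> U" for y z
  proof -
    have "(z, y) \<in> S \<alpha> \<longleftrightarrow> (y, z) \<in> S \<alpha>" if "\<alpha> \<in> T" for \<alpha>
    proof -
      have "\<alpha> \<le> d" using that unfolding T_def by auto
      hence "(S \<alpha>)\<inverse> = S \<alpha>" using symS by blast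
      thus ?thesis by (metis converse_iff)
    qed
    thus ?thesis unfolding U_def by blast
  qed
  define A where "A = adj_mat n U"
  have Acar: "A \<in> carrier_mat n n" unfolding A_def adj_mat_def by simp
  have finT: "finite T" unfolding T_def by auto
  have Tsub: "T \<subseteq> {1..d}" unfolding T_def by auto
  have ind: "(if (y, z) \<in> U then 1 else 0) = (\<Sum>\<alpha>\<in>T. (if (y, z) \<in> S \<alpha> then 1 else (0::complex)))"
    for y z
  proof (cases "(y, z) \<in> U")
    case True
    then obtain \<beta> where \<beta>: "\<beta> \<in> T" "(y, z) \<in> S \<beta>" unfolding U_def by auto
    have "(\<Sum>\<alpha>\<in>T. (if (y, z) \<in> S \<alpha> then 1 else (0::complex))) = (\<Sum>\<alpha>\<in>T. (if \<alpha> = \<beta> then 1 else 0))"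
    proof (rule sum.cong)
      fix \<alpha> assume "\<alpha> \<in> T"
      thus "(if (y, z) \<in> S \<alpha> then 1 else (0::complex)) = (if \<alpha> = \<beta> then 1 else 0)"
      proof (cases "\<alpha> = \<beta>")
        case False
        have "\<alpha> \<le> d" "\<beta> \<le> d" using \<open>\<alpha> \<in> T\<close> \<beta>(1) Tsub by auto
        hence "S \<alpha> \<inter> S \<beta> = {}" using disj False by blast
        thus ?thesis using \<beta>(2) False by auto
      qed (use \<beta> in auto)
    qed simp
    also have "\<dots> = 1" using \<beta>(1) finT by simp
    finally show ?thesis using True by simp
  next
    case False
    thus ?thesis unfolding U_def by (auto intro!: sum.neutral)
  qed
  define c where "c \<alpha> j = (if j = 0 then of_nat (valency n (S \<alpha>)) else if j = \<alpha> then b \<alpha> else a \<alpha>)"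
    for \<alpha> j
  define \<theta> where "\<theta> j = (\<Sum>\<alpha>\<in>T. c \<alpha> j)" for j
  have AE: "adj_mat n (S \<alpha>) * E j = c \<alpha> j \<cdot>\<^sub>m E j" if "\<alpha> \<in> {1..d}" "j \<le> d" for \<alpha> j
  proof -
    have C: "adj_mat n (S \<alpha>) * E 0 = of_nat (valency n (S \<alpha>)) \<cdot>\<^sub>m E 0"
      "adj_mat n (S \<alpha>) * E \<alpha> = b \<alpha> \<cdot>\<^sub>m E \<alpha>"
      "\<forall>j\<in>{1..d}. j \<noteq> \<alpha> \<longrightarrow> adj_mat n (S \<alpha>) * E j = a \<alpha> \<cdot>\<^sub>m E j"
      using bspec[OF EV that(1)] by blast+
    show ?thesis
    proof (cases "j = 0")
      case True thus ?thesis using C(1) unfolding c_def by simp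
    next
      case False
      show ?thesis
      proof (cases "j = \<alpha>")
        case True thus ?thesis using C(2) \<open>j \<noteq> 0\<close> unfolding c_def by simp
      next
        case False
        hence "adj_mat n (S \<alpha>) * E j = a \<alpha> \<cdot>\<^sub>m E j" using C(3) \<open>j \<noteq> 0\<close> that(2) by auto
        thus ?thesis using False \<open>j \<noteq> 0\<close> unfolding c_def by simp
      qed
    qed
  qed
  have EA: "\<forall>j\<le>d. E j * A = \<theta> j \<cdot>\<^sub>m E j"
  proof (intro allI impI)
    fix j assume j: "j \<le> d"
    have Ej: "E j \<in> carrier_mat n n" using Ecar j by auto
    show "E j * A = \<theta> j \<cdot>\<^sub>m E j"
    proof (rule eq_matI)
      fix x y assume xy: "x < dim_row (\<theta> j \<cdot>\<^sub>m E j)" "y < dim_col (\<theta> j \<cdot>\<^sub>m E j)"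
      hence x: "x < n" and y: "y < n" using Ej by auto
      have "(E j * A) $$ (x, y) = (\<Sum>z<n. E j $$ (x, z) * A $$ (z, y))"
        using Ej Acar x y by (simp add: scalar_prod_def lessThan_atLeast0)
      also have "\<dots> = (\<Sum>z<n. \<Sum>\<alpha>\<in>T. (if (y, z) \<in> S \<alpha> then 1 else 0) * E j $$ (z, x))"
      proof (rule sum.cong)
        fix z assume z: "z \<in> {..<n}"
        have "A $$ (z, y) = (if (y, z) \<in> U then 1 else 0)"
          using z y Usym unfolding A_def adj_mat_def by auto
        thus "E j $$ (x, z) * A $$ (z, y) = (\<Sum>\<alpha>\<in>T. (if (y, z) \<in> S \<alpha> then 1 else 0) * E j $$ (z, x))"
          using Esym[OF j x] z by (simp add: ind sum_distrib_left mult.commute)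
      qed simp
      also have "\<dots> = (\<Sum>\<alpha>\<in>T. (adj_mat n (S \<alpha>) * E j) $$ (y, x))"
        apply (subst sum.swap)
        using Ej x y by (auto simp: scalar_prod_def lessThan_atLeast0 adj_mat_def intro!: sum.cong)
      also have "\<dots> = (\<Sum>\<alpha>\<in>T. c \<alpha> j * E j $$ (y, x))"
        using AE j Tsub Ej x y by (intro sum.cong) auto
      also have "\<dots> = \<theta> j * E j $$ (x, y)"
        unfolding \<theta>_def using Esym[OF j x y] by (simp add: sum_distrib_right)
      finally show "(E j * A) $$ (x, y) = (\<theta> j \<cdot>\<^sub>m E j) $$ (x, y)" using x y Ej by simp
    qed (use Ej Acar in auto)
  qed
  have "{\<mu>. eigenvalue A \<mu>} \<subseteq> \<theta> ` {..d}"
    using key[OF Acar Ecar EA sumE] by blast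
  hence "card {\<mu>. eigenvalue A \<mu>} \<le> card (\<theta> ` {..d})" by (intro card_mono) auto
  also have "\<dots> \<le> d + 1" using card_image_le[of "{..d}" \<theta>] by simp
  finally show False using assms(9) UL unfolding A_def by simp
qed

end
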